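(* The meta-algorithm described in the context, with the commitment subroutine \textsc{CommitUnknown} (any parameter $\delta\in(0,1)$), guarantees \[ \sum_{\ell\in\mathcal L^+}R(\ell)\le 2N_{\textsc{F}}+2C. \]
   Context: Robust dynamic pricing: there are $T$ rounds and an unknown valuation $v^\star\in[0,1)$. At each round $t$ the seller posts a price $p_t\in[0,1]$. The true sale indicator is $y_t=\mathbbm 1\{p_t\le v^\star\}$; the seller observes $\sigma_t\in\{0,1\}$, and at most $C$ rounds are corrupted: $|\{t\in[T]:\sigma_t\neq y_t\}|\le C$. Meta-algorithm: let $D=\lceil\log_2 T\rceil$. Consider the complete binary tree of intervals of depth $D$ with root $[0,1)$, where each non-leaf node $[L,R)$ has children $[L,M)$ and $[M,R)$, $M=(L+R)/2$; the depth-$D$ nodes are the leaves, forming the set $\mathcal L$, and $\ell^\star$ is the unique leaf containing $v^\star$. $\mathcal L^+$ is the set of leaves lying above $\ell^\star$ (leaves $[L_\ell,R_\ell)$ with $L_\ell>v^\star$). The algorithm keeps a current node $I$, initially the root, and repeats until the horizon ends: if $I=[L,R)$ is not a leaf, it performs a safety check — post $L$ and observe $\sigma_L$, post $R$ and observe $\sigma_R$; the check fails if $\sigma_L=0$ or $\sigma_R=1$ (by convention the query at $L=0$ and the query at $R=1$ always count as passing). On failure $I$ becomes its parent; otherwise it posts $M$, observes $\sigma_M$, and $I$ becomes $[M,R)$ if $\sigma_M=1$ and $[L,M)$ if $\sigma_M=0$. If $I$ is a leaf, the commitment subroutine is run on $I$; if it returns FAIL, $I$ becomes its parent. \textsc{CommitUnknown}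 with parameter $\delta$: each leaf $\ell$ has a counter $s_\ell$, initialized to $0$ at the start of the horizon and never reset. On leaf $\ell=[L,R)$ it repeats the following two-round block: post $L$ and observe $\sigma_L$; if $\sigma_L=0$ return FAIL. Increase $s_\ell$ by $1$ and sample, independently, $B\sim\mathrm{Bernoulli}(\min\{4\ln(T/\delta)/s_\ell,1\})$. If $B=0$, post $L$ and observe $\sigma_L$, returning FAIL if $\sigma_L=0$; if $B=1$, post $R$ and observe $\sigma_R$, returning FAIL if $\sigma_R=1$. For a leaf $\ell$, $Q(\ell)$ is the set of rounds during which the commitment subroutine runs on $\ell$, and $R(\ell)=\sum_{t\in Q(\ell)}(v^\star-p_t\mathbbm 1\{p_t\le v^\star\})$. $N_{\textsc{F}}$ is the number of times the commitment subroutine returns FAIL on a leaf different from $\ell^\star$. *)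

theory Defs
  imports Complex_Main
begin

text \<open>Nodes of the binary tree are pairs (d, k): depth d, index k, standing for the
interval [k/2^d, (k+1)/2^d).  Rounds are indexed 0, ..., T-1.\<close>

definition lo :: "nat \<Rightarrow> nat \<Rightarrow> real" where
  "lo d k = real k / 2 ^ d"

definition hi :: "nat \<Rightarrow> nat \<Rightarrow> real" where
  "hi d k = real (k + 1) / 2 ^ d"

definition depth :: "nat \<Rightarrow> nat" where
  "depth T = nat \<lceil>log 2 (real T)\<rceil>"

text \<open>Phase of the algorithm at the current round:
  ChkL: safety check, query at L;  ChkR b: safety check, query at R (b = query at L passed);
  Mid: query at M;  Com1: first round of a CommitUnknown block (query at L);
  Com2 b: second round of a block, b = the sampled Bernoulli B.\<close>
datatype phase = ChkL | ChkR bool | Mid | Com1 | Com2 bool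

record state =
  dep :: nat
  idx :: nat
  ph  :: phase
  cnt :: "nat \<Rightarrow> nat"   \<comment> \<open>counters s_l, indexed by leaf index\<close>

definition price :: "state \<Rightarrow> real" where
  "price st = (case ph st of
      ChkL \<Rightarrow> lo (dep st) (idx st)
    | ChkR _ \<Rightarrow> hi (dep st) (idx st)
    | Mid \<Rightarrow> (lo (dep st) (idx st) + hi (dep st) (idx st)) / 2
    | Com1 \<Rightarrow> lo (dep st) (idx st)
    | Com2 b \<Rightarrow> (if b then hi (dep st) (idx st) else lo (dep st) (idx st)))"

definition enter :: "nat \<Rightarrow> nat \<Rightarrow> nat \<Rightarrow> state \<Rightarrow> state" where
  "enter T d k st = st\<lparr>dep := d, idx := k, ph := (if d = depth T then Com1 else ChkL)\<rparr>"

definition to_parent :: "nat \<Rightarrow> state \<Rightarrow> state" where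
  "to_parent T st = (if dep st = 0 then enter T 0 0 st
                     else enter T (dep st - 1) (idx st div 2) st)"

definition init_state :: "nat \<Rightarrow> state" where
  "init_state T = enter T 0 0 \<lparr>dep = 0, idx = 0, ph = ChkL, cnt = (\<lambda>_. 0)\<rparr>"

definition bprob :: "nat \<Rightarrow> real \<Rightarrow> nat \<Rightarrow> real" where
  "bprob T \<delta> s = min (4 * ln (real T / \<delta>) / real s) 1"

text \<open>Realised value of B: an arbitrary outcome c, restricted to the support of the
Bernoulli distribution (forced when the probability is 0 or 1).\<close>
definition bsample :: "nat \<Rightarrow> real \<Rightarrow> nat \<Rightarrow> bool \<Rightarrow> bool" where
  "bsample T \<delta> s c = (if bprob T \<delta> s = 1 then True else if bprob T \<delta> s = 0 then False else c)"

definition step :: "nat \<Rightarrow> real \<Rightarrow> bool \<Rightarrow> bool \<Rightarrow> state \<Rightarrow> state" where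
  "step T \<delta> c sg st = (let d = dep st; k = idx st in
     case ph st of
       ChkL \<Rightarrow> st\<lparr>ph := ChkR (lo d k = 0 \<or> sg)\<rparr>
     | ChkR pL \<Rightarrow> (if pL \<and> (hi d k = 1 \<or> \<not> sg) then st\<lparr>ph := Mid\<rparr> else to_parent T st)
     | Mid \<Rightarrow> (if sg then enter T (d + 1) (2 * k + 1) st else enter T (d + 1) (2 * k) st)
     | Com1 \<Rightarrow> (if \<not> sg then to_parent T st
                else (let s' = (cnt st)(k := cnt st k + 1)
                      in st\<lparr>cnt := s', ph := Com2 (bsample T \<delta> (s' k) c)\<rparr>))
     | Com2 b \<Rightarrow> (if (b \<and> sg) \<or> (\<not> b \<and> \<not> sg) then to_parent T st else st\<lparr>ph := Com1\<rparr>))"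

definition commit_fail :: "state \<Rightarrow> bool \<Rightarrow> bool" where
  "commit_fail st sg = (case ph st of
       Com1 \<Rightarrow> \<not> sg
     | Com2 b \<Rightarrow> (b \<and> sg) \<or> (\<not> b \<and> \<not> sg)
     | _ \<Rightarrow> False)"

definition in_commit :: "state \<Rightarrow> bool" where
  "in_commit st = (case ph st of Com1 \<Rightarrow> True | Com2 _ \<Rightarrow> True | _ \<Rightarrow> False)"

text \<open>Trajectory: sg t is the observation at round t, coin t the random bit at round t.\<close>
primrec traj :: "nat \<Rightarrow> real \<Rightarrow> (nat \<Rightarrow> bool) \<Rightarrow> (nat \<Rightarrow> bool) \<Rightarrow> nat \<Rightarrow> state" where
  "traj T \<delta> sg coin 0 = init_state T"
| "traj T \<delta> sg coin (Suc t) = step T \<delta> (coin t) (sg t) (traj T \<delta> sg coin t)"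

definition post :: "nat \<Rightarrow> real \<Rightarrow> (nat \<Rightarrow> bool) \<Rightarrow> (nat \<Rightarrow> bool) \<Rightarrow> nat \<Rightarrow> real" where
  "post T \<delta> sg coin t = price (traj T \<delta> sg coin t)"

text \<open>Number of corrupted rounds: sigma_t differs from y_t = [p_t <= v*].\<close>
definition corruptions :: "nat \<Rightarrow> real \<Rightarrow> real \<Rightarrow> (nat \<Rightarrow> bool) \<Rightarrow> (nat \<Rightarrow> bool) \<Rightarrow> nat" where
  "corruptions T \<delta> v sg coin = card {t. t < T \<and> sg t \<noteq> (post T \<delta> sg coin t \<le> v)}"

definition Qset :: "nat \<Rightarrow> real \<Rightarrow> (nat \<Rightarrow> bool) \<Rightarrow> (nat \<Rightarrow> bool) \<Rightarrow> nat \<Rightarrow> nat set" where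
  "Qset T \<delta> sg coin l = {t. t < T \<and> in_commit (traj T \<delta> sg coin t)
                            \<and> dep (traj T \<delta> sg coin t) = depth T \<and> idx (traj T \<delta> sg coin t) = l}"

definition regret_leaf :: "nat \<Rightarrow> real \<Rightarrow> real \<Rightarrow> (nat \<Rightarrow> bool) \<Rightarrow> (nat \<Rightarrow> bool) \<Rightarrow> nat \<Rightarrow> real" where
  "regret_leaf T \<delta> v sg coin l =
     (\<Sum>t\<in>Qset T \<delta> sg coin l.
        v - post T \<delta> sg coin t * (if post T \<delta> sg coin t \<le> v then 1 else 0))"

definition leaves_above :: "nat \<Rightarrow> real \<Rightarrow> nat set" where
  "leaves_above T v = {l. l < 2 ^ depth T \<and> lo (depth T) l > v}"

definition contains_v :: "nat \<Rightarrow> real \<Rightarrow> nat \<Rightarrow> bool" where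
  "contains_v T v l = (lo (depth T) l \<le> v \<and> v < hi (depth T) l)"

definition num_fail :: "nat \<Rightarrow> real \<Rightarrow> real \<Rightarrow> (nat \<Rightarrow> bool) \<Rightarrow> (nat \<Rightarrow> bool) \<Rightarrow> nat" where
  "num_fail T \<delta> v sg coin = card {t. t < T \<and> commit_fail (traj T \<delta> sg coin t) (sg t)
                                  \<and> \<not> contains_v T v (idx (traj T \<delta> sg coin t))}"

end

theory Submission
  imports Defs
begin

lemma lo_lt_hi: "lo d k < hi d k"
  unfolding lo_def hi_def by (simp add: divide_strict_right_mono)

lemma enter_ph: "ph (enter T d k st) = Com1 \<or> ph (enter T d k st) = ChkL"
  unfolding enter_def by simp

lemma to_parent_ph: "ph (to_parent T st) = Com1 \<or> ph (to_parent T st) = ChkL"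
  unfolding to_parent_def using enter_ph by simp

lemma init_ph: "ph (init_state T) \<noteq> Com2 b"
  unfolding init_state_def using enter_ph by (metis phase.distinct)

lemma step_Com2:
  assumes "ph (step T \<delta> c s st) = Com2 b"
  shows "ph st = Com1 \<and> s \<and> dep (step T \<delta> c s st) = dep st \<and> idx (step T \<delta> c s st) = idx st"
proof (cases "ph st")
  case ChkL then show ?thesis using assms by (simp add: step_def Let_def)
next
  case (ChkR x) then show ?thesis using assms to_parent_ph[of T st]
    by (auto simp add: step_def Let_def split: if_splits)
next
  case Mid then show ?thesis using assms enter_ph
    by (auto simp add: step_def Let_def split: if_splits) (metis phase.distinct)+
next
  case Com1 then show ?thesis using assms to_parent_ph[of T st]
    by (auto simp add: step_def Let_def split: if_splits)
next
  case (Com2 x) then show ?thesis using assms to_parent_ph[of T st]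
    by (auto simp add: step_def Let_def split: if_splits)
qed

theorem lemma5p3:
  fixes T C :: nat and \<delta> v :: real and sg coin :: "nat \<Rightarrow> bool"
  assumes "T \<ge> 1" and "0 \<le> v" and "v < 1" and "0 < \<delta>" and "\<delta> < 1"
    and "corruptions T \<delta> v sg coin \<le> C"
  shows "(\<Sum>l\<in>leaves_above T v. regret_leaf T \<delta> v sg coin l)
           \<le> 2 * real (num_fail T \<delta> v sg coin) + 2 * real C"
proof -
  define tr where "tr = traj T \<delta> sg coin"
  define S where "S = {t. t < T \<and> in_commit (tr t) \<and> dep (tr t) = depth T \<and> idx (tr t) \<in> leaves_above T v}"
  define F where "F = {t. t < T \<and> commit_fail (tr t) (sg t) \<and> \<not> contains_v T v (idx (tr t))}"
  define Cor where "Cor = {t. t < T \<and> sg t \<noteq> (post T \<delta> sg coin t \<le> v)}"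
  have finS: "finite S" unfolding S_def by simp
  have finF: "finite F" unfolding F_def by simp
  have finC: "finite Cor" unfolding Cor_def by simp
  have NF: "num_fail T \<delta> v sg coin = card F" unfolding num_fail_def F_def tr_def by simp
  have NC: "card Cor \<le> C" using assms(6) unfolding corruptions_def Cor_def by simp
  have finL: "finite (leaves_above T v)" unfolding leaves_above_def by simp
  have pv: "post T \<delta> sg coin t > v" if "t \<in> S" for t
  proof -
    have lo: "lo (depth T) (idx (tr t)) > v" using that unfolding S_def leaves_above_def by simp
    have hl: "hi (depth T) (idx (tr t)) > v" using lo lo_lt_hi less_trans by blast
    show ?thesis using that lo hl unfolding S_def post_def tr_def[symmetric] in_commit_def price_def
      by (auto split: phase.splits)
  qed
  have notc: "\<not> contains_v T v (idx (tr t))" if "t \<in> S" for t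
    using that unfolding S_def leaves_above_def contains_v_def by auto
  have sub: "S \<subseteq> F \<union> Cor \<union> Suc ` Cor"
  proof
    fix t assume tS: "t \<in> S"
    have tT: "t < T" using tS S_def by simp
    show "t \<in> F \<union> Cor \<union> Suc ` Cor"
    proof (cases "ph (tr t)")
      case Com1
      then show ?thesis using pv[OF tS] notc[OF tS] tT
        unfolding F_def Cor_def commit_fail_def by auto
    next
      case (Com2 b)
      show ?thesis
      proof (cases "b = sg t")
        case True
        then show ?thesis using Com2 notc[OF tS] tT unfolding F_def commit_fail_def by auto
      next
        case False
        show ?thesis
        proof (cases b)
          case False
          then show ?thesis using \<open>b \<noteq> sg t\<close> pv[OF tS] tT unfolding Cor_def by auto
        next
          case True
          obtain t' where t': "t = Suc t'"
            using Com2 init_ph[of T b] unfolding tr_def by (cases t) auto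
          have st: "ph (tr t') = Com1 \<and> sg t' \<and> dep (tr t) = dep (tr t') \<and> idx (tr t) = idx (tr t')"
            proof -
            have "ph (step T \<delta> (coin t') (sg t') (tr t')) = Com2 b" using Com2 t' unfolding tr_def by simp
            from step_Com2[OF this] show ?thesis using t' unfolding tr_def by (metis traj.simps(2))
          qed
          have "t' \<in> S" using st tS t' unfolding S_def in_commit_def by auto
          then have "t' \<in> Cor" using pv[OF \<open>t' \<in> S\<close>] st t' tT unfolding Cor_def by auto
          then show ?thesis using t' by auto
        qed
      qed
    qed (use tS S_def in_commit_def in auto)
  qed
  have cardS: "card S \<le> card F + 2 * card Cor"
  proof -
    have "card S \<le> card (F \<union> Cor \<union> Suc ` Cor)" using sub finF finC by (intro card_mono) auto
    also have "\<dots> \<le> card F + card Cor + card (Suc ` Cor)"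
      by (meson card_Un_le add_le_mono order_trans le_refl)
    also have "card (Suc ` Cor) = card Cor" by (simp add: card_image)
    finally show ?thesis by simp
  qed
  have eq: "(\<Sum>l\<in>leaves_above T v. regret_leaf T \<delta> v sg coin l) = (\<Sum>t\<in>S. v)"
  proof -
    have "(\<Sum>l\<in>leaves_above T v. regret_leaf T \<delta> v sg coin l)
        = (\<Sum>l\<in>leaves_above T v. \<Sum>t\<in>Qset T \<delta> sg coin l. v)"
    proof (rule sum.cong[OF refl], unfold regret_leaf_def, rule sum.cong[OF refl])
      fix l t assume l: "l \<in> leaves_above T v" and t: "t \<in> Qset T \<delta> sg coin l"
      have "t \<in> S" using l t unfolding Qset_def S_def tr_def by auto
      then show "v - post T \<delta> sg coin t * (if post T \<delta> sg coin t \<le> v then 1 else 0) = v"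
        using pv[OF \<open>t \<in> S\<close>] by auto
    qed
    also have "\<dots> = (\<Sum>t\<in>(\<Union>l\<in>leaves_above T v. Qset T \<delta> sg coin l). v)"
      by (rule sum.UNION_disjoint[symmetric]) (auto simp: finL Qset_def)
    also have "(\<Union>l\<in>leaves_above T v. Qset T \<delta> sg coin l) = S"
      unfolding Qset_def S_def tr_def by auto
    finally show ?thesis .
  qed
  have "(\<Sum>t\<in>S. v) = v * card S" by simp
  also have "\<dots> \<le> card S" using assms(2,3) by (simp add: mult_left_le_one_le)
  also have "\<dots> \<le> real (card F) + 2 * real (card Cor)" using cardS by linarith
  also have "\<dots> \<le> 2 * real (num_fail T \<delta> v sg coin) + 2 * real C" using NF NC by simp
  finally show ?thesis using eq by simp
qed

end
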